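(* Let $f:[0,+\infty)\to\mathbb{C}$ be a continuous function, not identically zero, such that $\lim_{x\to+\infty}f(x)=0$. Then for every $n\ge1$ and every choice of pairwise distinct numbers $\lambda_1,\dots,\lambda_n>0$, the functions $x\mapsto f(x/\lambda_1),\dots,x\mapsto f(x/\lambda_n)$ are linearly independent; that is, if $c_1,\dots,c_n\in\mathbb{C}$ satisfy $\sum_{k=1}^n c_k f(x/\lambda_k)=0$ for all $x\ge 0$, then $c_1=\dots=c_n=0$. *)

theory Defs
  imports "HOL-Analysis.Analysis"
begin

end

theory Submission
  imports Defs "HOL-Complex_Analysis.Complex_Analysis" "HOL-Real_Asymp.Real_Asymp"
begin


definition LT :: "(real \<Rightarrow> complex) \<Rightarrow> real \<Rightarrow> complex \<Rightarrow> complex" where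
  "LT h a s = integral {a..} (\<lambda>u. h u * exp (- (s * of_real u)))"

lemma LT_norm_le:
  fixes h :: "real \<Rightarrow> complex"
  assumes "\<And>u. norm (h u) \<le> B"
  shows "norm (h u * exp (- (s * of_real u))) \<le> B * exp (- (Re s * u))"
proof -
  have "norm (h u * exp (- (s * of_real u))) = norm (h u) * exp (- (Re s * u))"
    by (simp add: norm_mult)
  also have "\<dots> \<le> B * exp (- (Re s * u))"
    using assms by (intro mult_right_mono) auto
  finally show ?thesis .
qed

lemma exp_int:
  assumes s: "(r::real) > 0"
  shows "(\<lambda>u. B * exp (- (r * u))) integrable_on {a..}"
  using integrable_on_mult_right[OF integrable_on_exp_minus_to_infinity[OF s, of a], of B] by simp

lemma LT_abs_int:
  fixes h :: "real \<Rightarrow> complex"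
  assumes cont: "continuous_on UNIV h" and bd: "\<And>u. norm (h u) \<le> B" and s: "Re s > 0"
  shows "(\<lambda>u. h u * exp (- (s * of_real u))) absolutely_integrable_on {a..}"
proof (rule measurable_bounded_by_integrable_imp_absolutely_integrable)
  show "(\<lambda>u. h u * exp (- (s * of_real u))) \<in> borel_measurable (lebesgue_on {a..})"
    by (rule continuous_imp_measurable_on_sets_lebesgue)
       (auto intro!: continuous_intros continuous_on_subset[OF cont])
  show "(\<lambda>u. B * exp (- (Re s * u))) integrable_on {a..}"
    by (rule exp_int[OF s])
qed (auto intro: LT_norm_le[OF bd])

lemma LT_int:
  fixes h :: "real \<Rightarrow> complex"
  assumes cont: "continuous_on UNIV h" and bd: "\<And>u. norm (h u) \<le> B" and s: "Re s > 0"
  shows "(\<lambda>u. h u * exp (- (s * of_real u))) integrable_on {a..}"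
  using LT_abs_int[OF assms] set_lebesgue_integral_eq_integral(1) absolutely_integrable_on_def by blast

lemma LT_bound:
  fixes h :: "real \<Rightarrow> complex"
  assumes cont: "continuous_on UNIV h" and bd: "\<And>u. norm (h u) \<le> B" and s: "Re s > 0"
  shows "norm (LT h a s) \<le> B * (exp (- (Re s * a)) / Re s)"
proof -
  have "norm (LT h a s) \<le> integral {a..} (\<lambda>u. B * exp (- (Re s * u)))"
    unfolding LT_def
    by (intro integral_norm_bound_integral LT_int[OF assms] LT_norm_le[OF bd] exp_int[OF s])
  also have "\<dots> = B * (exp (- (Re s * a)) / Re s)"
    using has_integral_exp_minus_to_infinity[OF s, of a]
    by (subst integral_mult_right) (simp add: integral_unique)
  finally show ?thesis .
qed



lemma integral_translate:
  fixes k :: "real \<Rightarrow> complex"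
  assumes k: "k absolutely_integrable_on T"
  shows "(\<lambda>u. k (u - d)) absolutely_integrable_on ((+) d ` T)"
    and "integral ((+) d ` T) (\<lambda>u. k (u - d)) = integral T k"
proof -
  let ?F = "\<lambda>x. indicator T x *\<^sub>R k x"
  have ind: "indicator ((+) d ` T) x = (indicator T (-d + 1 * x) :: real)" for x
  proof -
    have "x \<in> (+) d ` T \<longleftrightarrow> x - d \<in> T"
      by (auto simp: image_iff intro!: bexI[of _ "x - d"])
    then show ?thesis by (simp add: indicator_def)
  qed
  have F: "integrable lebesgue ?F"
    using k unfolding set_integrable_def .
  have eq: "(\<lambda>x. indicator ((+) d ` T) x *\<^sub>R k (x - d)) = (\<lambda>x. ?F (-d + 1 * x))"
    by (simp add: ind)
  have G: "integrable lebesgue (\<lambda>x. ?F (-d + 1 * x))"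
    using F by (subst lebesgue_integrable_real_affine_iff) auto
  show 1: "(\<lambda>u. k (u - d)) absolutely_integrable_on ((+) d ` T)"
    unfolding set_integrable_def eq by (rule G)
  have "integral ((+) d ` T) (\<lambda>u. k (u - d)) = (LINT x:((+) d ` T) | lebesgue. k (x - d))"
    by (rule set_lebesgue_integral_eq_integral(2)[OF 1, symmetric])
  also have "\<dots> = (\<integral>x. ?F (-d + 1 * x) \<partial>lebesgue)"
    unfolding set_lebesgue_integral_def eq ..
  also have "\<dots> = (\<integral>x. ?F x \<partial>lebesgue)"
    using lebesgue_integral_real_affine[of 1 ?F "-d"] by simp
  also have "\<dots> = integral T k"
    using set_lebesgue_integral_eq_integral(2)[OF k] unfolding set_lebesgue_integral_def .
  finally show "integral ((+) d ` T) (\<lambda>u. k (u - d)) = integral T k" .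
qed

lemma image_plus_atLeast: "(+) d ` {a - d..} = {a::real..}"
  by (auto simp: image_iff intro!: bexI[of _ "x - d" for x])

lemma LT_shift:
  fixes h :: "real \<Rightarrow> complex"
  assumes cont: "continuous_on UNIV h" and bd: "\<And>u. norm (h u) \<le> B" and s: "Re s > 0"
  shows "integral {a..} (\<lambda>u. h (u - d) * exp (- (s * of_real u))) = exp (- (s * of_real d)) * LT h (a - d) s"
proof -
  let ?k = "\<lambda>v. h v * exp (- (s * of_real v))"
  have "integral {a..} (\<lambda>u. h (u - d) * exp (- (s * of_real u))) = integral {a..} (\<lambda>u. exp (- (s * of_real d)) * ?k (u - d))"
    by (intro integral_cong) (simp add: exp_diff[symmetric] algebra_simps exp_add[symmetric])
  also have "\<dots> = exp (- (s * of_real d)) * integral {a..} (\<lambda>u. ?k (u - d))"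
    by (rule integral_mult_right)
  also have "integral {a..} (\<lambda>u. ?k (u - d)) = integral {a-d..} ?k"
    using integral_translate(2)[OF LT_abs_int[OF assms, of "a - d"], of d] by (simp add: image_plus_atLeast)
  finally show ?thesis by (simp add: LT_def)
qed

lemma LT_split:
  fixes h :: "real \<Rightarrow> complex"
  assumes cont: "continuous_on UNIV h" and bd: "\<And>u. norm (h u) \<le> B" and s: "Re s > 0" and aa: "a \<le> a'"
  shows "LT h a s = integral {a..a'} (\<lambda>u. h u * exp (- (s * of_real u))) + LT h a' s"
proof -
  let ?k = "\<lambda>v. h v * exp (- (s * of_real v))"
  have i1: "(?k has_integral integral {a..a'} ?k) {a..a'}"
    by (intro integrable_integral integrable_continuous_interval continuous_intros continuous_on_subset[OF cont]) auto
  have i2: "(?k has_integral LT h a' s) {a'..}"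
    unfolding LT_def using LT_int[OF assms(1-3)] by (rule integrable_integral)
  have "(?k has_integral (integral {a..a'} ?k + LT h a' s)) ({a..a'} \<union> {a'..})"
    by (rule has_integral_Un[OF i1 i2]) (auto intro: negligible_subset[of "{a'}"])
  moreover have "{a..a'} \<union> {a'..} = {a..}" using aa by auto
  ultimately show ?thesis unfolding LT_def by (simp add: integral_unique)
qed



lemma sphere_identity:
  fixes d :: complex
  assumes "norm d = 1"
  shows "norm (1 + d ^ 2) = 2 * \<bar>Re d\<bar>"
proof -
  have n: "(Re d)^2 + (Im d)^2 = 1"
    using assms by (simp add: cmod_def)
  have "1 + d ^ 2 = 2 * of_real (Re d) * d"
    using n by (simp add: complex_eq_iff power2_eq_square algebra_simps)
  then show ?thesis using assms by (simp add: norm_mult)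
qed

lemma entire_zero:
  fixes P E :: "complex \<Rightarrow> complex" and B :: real
  assumes holP: "P holomorphic_on UNIV" and holE: "E holomorphic_on UNIV"
    and nz: "P \<beta> \<noteq> 0" and B: "B \<ge> 0"
    and bnd: "\<And>s. Re s \<noteq> 0 \<Longrightarrow> P s \<noteq> 0 \<Longrightarrow> norm (E s / P s) \<le> B / \<bar>Re s\<bar>"
    and hor: "\<And>z. Re z = 0 \<Longrightarrow> P z = 0 \<Longrightarrow>
       ((\<lambda>\<sigma>. of_real \<sigma> * (E (z + of_real \<sigma>) / P (z + of_real \<sigma>))) \<longlongrightarrow> 0) (at_right 0)"
    and Ps: "P s \<noteq> 0"
  shows "E s = 0"
proof -
  define F where "F = (\<lambda>s. E s / P s)"
  have ev: "eventually (\<lambda>w. P w \<noteq> 0) (at z)" for z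
    using non_zero_neighbour_alt[OF holP open_UNIV connected_UNIV _ _ nz, of z]
    by (auto elim: eventually_mono)
  have contP: "continuous_on UNIV P" using holP holomorphic_on_imp_continuous_on by blast
  have openNZ: "open {w. P w \<noteq> 0}"
    using open_Collect_neq[OF contP continuous_on_const[of UNIV 0]] by simp
  have holF: "F holomorphic_on {w. P w \<noteq> 0}"
    unfolding F_def
    by (intro holomorphic_intros holomorphic_on_subset[OF holP] holomorphic_on_subset[OF holE]) auto
  have ext: "\<exists>r>0. (\<forall>w\<in>ball z r - {z}. P w \<noteq> 0) \<and>
              (\<exists>g. g holomorphic_on ball z r \<and> (\<forall>w\<in>ball z r - {z}. g w = F w))" if Pz: "P z = 0" for z
  proof -
    obtain r where r: "r > 0" "\<And>w. w \<noteq> z \<Longrightarrow> dist w z < r \<Longrightarrow> P w \<noteq> 0"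
      using ev[of z] unfolding eventually_at by blast
    have nzb: "\<forall>w\<in>ball z r - {z}. P w \<noteq> 0"
      using r by (auto simp: dist_commute)
    have hol: "F holomorphic_on ball z r - {z}"
      by (rule holomorphic_on_subset[OF holF]) (use nzb in auto)
    have zin: "z \<in> interior (ball z r)" using r by simp
    have "\<exists>g. g holomorphic_on ball z r \<and> (\<forall>w\<in>ball z r - {z}. g w = F w)"
    proof (cases "Re z = 0")
      case False
      have "eventually (\<lambda>w. \<bar>Re w\<bar> > \<bar>Re z\<bar> / 2) (at z)"
      proof (rule order_tendstoD(1))
        show "((\<lambda>w. \<bar>Re w\<bar>) \<longlongrightarrow> \<bar>Re z\<bar>) (at z)"
          by (intro tendsto_intros)
        show "\<bar>Re z\<bar> / 2 < \<bar>Re z\<bar>" using False by simp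
      qed
      then have "eventually (\<lambda>w. norm (F w) \<le> 2 * B / \<bar>Re z\<bar>) (at z)"
        using ev[of z]
      proof eventually_elim
        case (elim w)
        then have w: "\<bar>Re w\<bar> > \<bar>Re z\<bar> / 2" and Pw: "P w \<noteq> 0" by auto
        have "norm (F w) \<le> B / \<bar>Re w\<bar>"
          unfolding F_def using bnd[OF _ Pw] w False by auto
        also have "\<dots> \<le> B / (\<bar>Re z\<bar> / 2)"
          using w False B by (intro divide_left_mono) auto
        finally show "norm (F w) \<le> 2 * B / \<bar>Re z\<bar>" by (simp add: mult.commute)
      qed
      then show ?thesis
        using holomorphic_on_extend_bounded[OF hol zin] by blast
    next
      case True
      define F1 where "F1 = (\<lambda>w. (w - z) * F w)"
      have F1eq: "F1 = (\<lambda>w. ((w - z) * E w) / P w)"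
        by (simp add: F1_def F_def fun_eq_iff)
      have ne: "not_essential F1 z"
        unfolding F1eq
        by (intro not_essential_divide not_essential_holomorphic[of _ UNIV]
              isolated_singularity_at_holomorphic[of _ UNIV] holomorphic_intros
              holomorphic_on_subset[OF holP] holomorphic_on_subset[OF holE]) auto
      define p where "p = (\<lambda>\<sigma>::real. z + of_real \<sigma>)"
      have plim: "filterlim p (at z) (at_right 0)"
      proof (rule filterlim_atI)
        show "(p \<longlongrightarrow> z) (at_right 0)"
          unfolding p_def by (auto intro!: tendsto_eq_intros)
        show "eventually (\<lambda>x. p x \<noteq> z) (at_right 0)"
          unfolding p_def eventually_at_right_field by (auto intro!: exI[of _ 1])
      qed
      have F1p: "((\<lambda>\<sigma>. F1 (p \<sigma>)) \<longlongrightarrow> 0) (at_right 0)"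
        using hor[OF True Pz] by (simp add: F1_def p_def F_def)
      have lim0: "(F1 \<longlongrightarrow> 0) (at z)"
      proof -
        from ne obtain L where "(F1 \<longlongrightarrow> L) (at z) \<or> is_pole F1 z"
          unfolding not_essential_def by blast
        then show ?thesis
        proof
          assume L: "(F1 \<longlongrightarrow> L) (at z)"
          have "((\<lambda>\<sigma>. F1 (p \<sigma>)) \<longlongrightarrow> L) (at_right 0)"
            by (rule filterlim_compose[OF L plim])
          then have "L = 0" using F1p tendsto_unique[of "at_right (0::real)"] by auto
          then show ?thesis using L by simp
        next
          assume "is_pole F1 z"
          then have "filterlim F1 at_infinity (at z)" unfolding is_pole_def .
          then have "filterlim (\<lambda>\<sigma>. F1 (p \<sigma>)) at_infinity (at_right 0)"
            by (rule filterlim_compose[OF _ plim])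
          then show ?thesis
            using not_tendsto_and_filterlim_at_infinity[OF _ F1p] by simp
        qed
      qed
      then show ?thesis
        using holomorphic_on_extend_lim[OF hol zin] unfolding F1_def by blast
    qed
    then show ?thesis using r nzb by blast
  qed
  define Ft where "Ft = (\<lambda>s. if P s \<noteq> 0 then F s else Lim (at s) F)"
  have "Ft analytic_on UNIV"
    unfolding analytic_on_def
  proof
    fix z :: complex
    show "\<exists>e>0. Ft holomorphic_on ball z e"
    proof (cases "P z = 0")
      case False
      then obtain e where e: "e > 0" "ball z e \<subseteq> {w. P w \<noteq> 0}"
        using openNZ open_contains_ball by blast
      have "Ft holomorphic_on ball z e"
        by (rule holomorphic_transform[OF holomorphic_on_subset[OF holF e(2)]])
           (use e(2) in \<open>auto simp: Ft_def\<close>)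
      then show ?thesis using e by blast
    next
      case True
      from ext[OF True] obtain r g where r: "r > 0" "\<forall>w\<in>ball z r - {z}. P w \<noteq> 0"
        and g: "g holomorphic_on ball z r" "\<forall>w\<in>ball z r - {z}. g w = F w" by blast
      have "isCont g z"
        using g(1) r(1) by (meson centre_in_ball continuous_on_eq_continuous_at holomorphic_on_imp_continuous_on open_ball)
      then have "(g \<longlongrightarrow> g z) (at z)" by (simp add: isCont_def)
      moreover have "eventually (\<lambda>w. g w = F w) (at z)"
        unfolding eventually_at using r g(2) by (auto intro!: exI[of _ r] simp: dist_commute)
      ultimately have "(F \<longlongrightarrow> g z) (at z)" by (rule Lim_transform_eventually)
      then have "Lim (at z) F = g z" by (rule tendsto_Lim[rotated]) simp
      then have "Ft holomorphic_on ball z r"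
        by (intro holomorphic_transform[OF g(1)]) (use True r g(2) in \<open>auto simp: Ft_def\<close>)
      then show ?thesis using r by blast
    qed
  qed
  then have holFt: "Ft holomorphic_on UNIV" by (simp add: analytic_imp_holomorphic)
  have contFt: "isCont Ft s" for s
    using holFt holomorphic_on_imp_continuous_on continuous_on_eq_continuous_at by blast
  have FtF: "Ft w = F w" if "P w \<noteq> 0" for w using that by (simp add: Ft_def)
  have bndFt: "norm (Ft s) \<le> B / \<bar>Re s\<bar>" if Re: "Re s \<noteq> 0" for s
  proof (rule tendsto_le[of "at s"])
    show "((\<lambda>w. norm (Ft w)) \<longlongrightarrow> norm (Ft s)) (at s)"
      using contFt[of s] by (intro tendsto_intros) (simp add: isCont_def)
    show "((\<lambda>w. B / \<bar>Re w\<bar>) \<longlongrightarrow> B / \<bar>Re s\<bar>) (at s)"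
      using Re by (intro tendsto_intros) auto
    have "eventually (\<lambda>w. Re w \<noteq> 0) (at s)"
      using tendsto_imp_eventually_ne[of Re "Re s" "at s" 0] Re tendsto_Re[OF tendsto_ident_at, of s UNIV] by auto
    then show "eventually (\<lambda>w. norm (Ft w) \<le> B / \<bar>Re w\<bar>) (at s)"
      using ev[of s] by eventually_elim (auto simp: FtF F_def intro: bnd)
  qed simp
  have bnd2: "norm (Ft s) \<le> 2 * B" for s
  proof (cases "\<bar>Re s\<bar> > 1")
    case True
    have "norm (Ft s) \<le> B / \<bar>Re s\<bar>" using bndFt True by auto
    also have "\<dots> \<le> B" using True B by (simp add: divide_le_eq mult_le_cancel_left1)
    finally show ?thesis using B by simp
  next
    case False
    define c where "c = \<i> * of_real (Im s)"
    define h where "h = (\<lambda>w. Ft w * (1 + (w - c) ^ 2))"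
    have hs: "norm (h s) \<le> 2 * B"
    proof (rule maximum_modulus_frontier[of h "cball c 1"])
      show "h holomorphic_on interior (cball c 1)"
        unfolding h_def by (intro holomorphic_intros holomorphic_on_subset[OF holFt]) auto
      show "continuous_on (closure (cball c 1)) h"
        unfolding h_def
        by (intro continuous_intros continuous_on_subset[OF holomorphic_on_imp_continuous_on[OF holFt]]) auto
      show "bounded (cball c 1)" by simp
      show "s \<in> cball c 1"
        using False by (simp add: c_def dist_norm cmod_def complex_eq_iff)
    next
      fix w assume "w \<in> frontier (cball c 1)"
      then have nw: "norm (w - c) = 1" by (simp add: dist_norm norm_minus_commute)
      have Rw: "Re (w - c) = Re w" by (simp add: c_def)
      show "norm (h w) \<le> 2 * B"
      proof (cases "Re w = 0")
        case True
        then show ?thesis using B sphere_identity[OF nw] by (simp add: h_def norm_mult Rw c_def)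
      next
        case False
        have "norm (h w) = norm (Ft w) * (2 * \<bar>Re w\<bar>)"
          using sphere_identity[OF nw] by (simp add: h_def norm_mult Rw c_def)
        also have "\<dots> \<le> B / \<bar>Re w\<bar> * (2 * \<bar>Re w\<bar>)"
          using bndFt[OF False] by (intro mult_right_mono) auto
        also have "\<dots> = 2 * B" using False by simp
        finally show ?thesis .
      qed
    qed
    have "s - c = of_real (Re s)"
      by (simp add: c_def complex_eq_iff)
    moreover have e: "cmod (1 + complex_of_real ((Re s)^2)) = 1 + (Re s)^2"
    proof -
      have "1 + complex_of_real ((Re s)^2) = complex_of_real (1 + (Re s)^2)" by simp
      then show ?thesis by (simp only: norm_of_real) (simp add: add_nonneg_nonneg)
    qed
    ultimately have "norm (h s) = norm (Ft s) * (1 + (Re s)^2)"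
      unfolding h_def norm_mult
      by (simp del: of_real_power add: of_real_power[symmetric])
    moreover have "norm (Ft s) \<le> norm (Ft s) * (1 + (Re s)^2)"
      by (simp add: mult_le_cancel_left1) 
    ultimately show ?thesis using hs by linarith
  qed
  have "Ft constant_on UNIV"
    by (rule Liouville_theorem[OF holFt]) (use bnd2 in \<open>auto simp: bounded_iff\<close>)
  then obtain k where k: "\<And>w. Ft w = k" unfolding constant_on_def by blast
  have "k = 0"
  proof (rule ccontr)
    assume kn: "k \<noteq> 0"
    define \<sigma> where "\<sigma> = (2 * B + 1) / norm k"
    have sp: "\<sigma> > 0" using kn B by (simp add: \<sigma>_def)
    have "norm k \<le> B / \<bar>Re (of_real \<sigma> :: complex)\<bar>"
      using bndFt[of "of_real \<sigma>"] sp k by simp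
    also have "\<dots> = B * norm k / (2 * B + 1)" using sp B by (simp add: \<sigma>_def)
    also have "\<dots> < norm k" using kn B by (simp add: divide_less_eq)
    finally show False by simp
  qed
  then have "F s = 0" using FtF[OF Ps] k by simp
  then show ?thesis using Ps by (simp add: F_def)
qed



lemma I_holo:
  fixes h :: "real \<Rightarrow> complex"
  assumes cont: "continuous_on UNIV h"
  shows "(\<lambda>s. integral {a..b} (\<lambda>v. h v * exp (- (s * of_real v)))) holomorphic_on UNIV"
proof -
  have "(\<lambda>s. integral (cbox a b) (\<lambda>v. h v * exp (- (s * of_real v)))) holomorphic_on UNIV"
  proof (rule leibniz_rule_holomorphic[where fx = "\<lambda>s v. h v * exp (- (s * of_real v)) * (- of_real v)"])
    fix x t
    show "((\<lambda>x. h t * exp (- (x * of_real t))) has_field_derivative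
            h t * exp (- (x * of_real t)) * (- of_real t)) (at x within UNIV)"
      by (auto intro!: derivative_eq_intros)
  next
    fix x
    show "(\<lambda>v. h v * exp (- (x * of_real v))) integrable_on cbox a b"
      by (intro integrable_continuous continuous_intros continuous_on_subset[OF cont]) auto
  next
    show "continuous_on (UNIV \<times> cbox a b) (\<lambda>(x, t). h t * exp (- (x * of_real t)) * (- of_real t))"
      by (auto simp: case_prod_unfold intro!: continuous_intros continuous_on_compose2[OF cont])
  qed auto
  then show ?thesis by simp
qed

lemma LT_horiz:
  fixes h :: "real \<Rightarrow> complex"
  assumes cont: "continuous_on UNIV h" and bd: "\<And>u. norm (h u) \<le> B"
    and lim: "(h \<longlongrightarrow> 0) at_top" and z: "Re z = 0"
  shows "((\<lambda>\<sigma>. of_real \<sigma> * LT h 0 (z + of_real \<sigma>)) \<longlongrightarrow> 0) (at_right 0)"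
proof (rule tendstoI)
  fix \<epsilon> :: real assume e: "\<epsilon> > 0"
  have B0: "B \<ge> 0" using bd[of 0] norm_ge_zero order_trans by blast
  obtain U where U: "\<And>u. u \<ge> U \<Longrightarrow> norm (h u) < \<epsilon> / 2"
    using tendstoD[OF lim, of "\<epsilon>/2"] e unfolding eventually_at_top_linorder by auto
  define U' where "U' = max U 0"
  have U'0: "U' \<ge> 0" by (simp add: U'_def)
  define hU where "hU = (\<lambda>u. h (max u U'))"
  have contU: "continuous_on UNIV hU"
    unfolding hU_def by (intro continuous_on_compose2[OF cont] continuous_intros) auto
  have bdU: "norm (hU u) \<le> \<epsilon> / 2" for u
    unfolding hU_def using U[of "max u U'"] by (auto simp: U'_def intro: less_imp_le)
  have main: "norm (of_real \<sigma> * LT h 0 (z + of_real \<sigma>)) \<le> \<sigma> * (B * U') + \<epsilon> / 2" if sp: "\<sigma> > 0" for \<sigma>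
  proof -
    let ?w = "z + of_real \<sigma>"
    have Rw: "Re ?w = \<sigma>" using z by simp
    have wp: "Re ?w > 0" using Rw sp by simp
    let ?k = "\<lambda>u. h u * exp (- (?w * of_real u))"
    have split: "LT h 0 ?w = integral {0..U'} ?k + LT h U' ?w"
      by (rule LT_split[OF cont bd wp U'0])
    have "LT h U' ?w = LT hU U' ?w"
      unfolding LT_def by (intro integral_cong) (auto simp: hU_def max_def)
    also have "norm \<dots> \<le> \<epsilon> / 2 * (exp (- (Re ?w * U')) / Re ?w)"
      by (rule LT_bound[OF contU bdU wp])
    also have "\<dots> \<le> \<epsilon> / 2 * (1 / \<sigma>)"
    proof -
      have "exp (- (\<sigma> * U')) \<le> 1" using sp U'0 by (simp add: mult_nonneg_nonneg)
      then have "exp (- (\<sigma> * U')) / \<sigma> \<le> 1 / \<sigma>" using sp by (intro divide_right_mono) auto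
      then show ?thesis using e Rw by (intro mult_left_mono) auto
    qed
    finally have n2: "norm (LT h U' ?w) \<le> \<epsilon> / 2 * (1 / \<sigma>)" .
    have "norm (integral {0..U'} ?k) \<le> integral {0..U'} (\<lambda>_. B)"
    proof (rule integral_norm_bound_integral)
      show "?k integrable_on {0..U'}"
        by (intro integrable_continuous_interval continuous_intros continuous_on_subset[OF cont]) auto
      show "(\<lambda>_. B) integrable_on {0..U'}" by (rule integrable_const_ivl)
      fix u assume "u \<in> {0..U'}"
      then have u: "u \<ge> 0" by simp
      have "norm (?k u) \<le> B * exp (- (Re ?w * u))" by (rule LT_norm_le[OF bd])
      also have "\<dots> \<le> B * 1" using u sp Rw B0 by (intro mult_left_mono) auto
      finally show "norm (?k u) \<le> B" by simp
    qed
    also have "\<dots> = B * U'" using U'0 by simp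
    finally have n1: "norm (integral {0..U'} ?k) \<le> B * U'" .
    have "norm (of_real \<sigma> * LT h 0 ?w) = \<sigma> * norm (LT h 0 ?w)"
      using sp by (simp add: norm_mult)
    also have "\<dots> \<le> \<sigma> * (B * U' + \<epsilon> / 2 * (1 / \<sigma>))"
      using n1 n2 sp unfolding split by (intro mult_left_mono norm_triangle_le) auto
    also have "\<dots> = \<sigma> * (B * U') + \<epsilon> / 2" using sp by (simp add: algebra_simps)
    finally show ?thesis .
  qed
  define b where "b = \<epsilon> / (2 * (B * U' + 1))"
  have BU: "B * U' \<ge> 0" using B0 U'0 by simp
  have bp: "b > 0" unfolding b_def using e BU by (intro divide_pos_pos) auto
  show "eventually (\<lambda>\<sigma>. dist (of_real \<sigma> * LT h 0 (z + of_real \<sigma>)) 0 < \<epsilon>) (at_right 0)"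
    unfolding eventually_at_right_field
  proof (intro exI[of _ b] conjI allI impI)
    show "b > 0" by (rule bp)
    fix \<sigma> :: real assume s: "\<sigma> > 0" "\<sigma> < b"
    have "\<sigma> * (B * U') \<le> b * (B * U')"
      using s B0 U'0 by (intro mult_right_mono) auto
    also have "\<dots> < \<epsilon> / 2"
    proof -
      have "b * (B * U') = \<epsilon> / 2 * ((B * U') / (B * U' + 1))"
        by (simp add: b_def field_simps)
      also have "\<dots> < \<epsilon> / 2 * 1"
        using e BU by (intro mult_strict_left_mono) (auto simp: divide_less_eq)
      finally show ?thesis by simp
    qed
    finally have "\<sigma> * (B * U') < \<epsilon> / 2" .
    then show "dist (of_real \<sigma> * LT h 0 (z + of_real \<sigma>)) 0 < \<epsilon>"
      using main[OF s(1)] by simp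
  qed
qed



lemma psi_cont:
  fixes g :: "real \<Rightarrow> complex"
  assumes cont: "continuous_on UNIV g" and lim: "(g \<longlongrightarrow> 0) at_top"
  shows "continuous_on {0..1} (\<lambda>t::real. if t \<le> 0 then 0 else cnj (g (- ln t)))"
proof -
  let ?\<psi> = "\<lambda>t::real. if t \<le> 0 then 0 else cnj (g (- ln t))"
  have gc: "isCont g x" for x using cont continuous_on_eq_continuous_at by blast
  have "continuous (at t within {0..1}) ?\<psi>" if t: "t \<in> {0..1}" for t
  proof (cases "t = 0")
    case True
    have mlnt: "filterlim (\<lambda>x. - ln x) at_top (at_right (0::real))"
      using ln_at_0 by (simp add: filterlim_uminus_at_top)
    have "((\<lambda>x. cnj (g (- ln x))) \<longlongrightarrow> cnj 0) (at_right 0)"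
      by (intro tendsto_cnj filterlim_compose[OF lim mlnt])
    then have l0: "((\<lambda>x. cnj (g (- ln x))) \<longlongrightarrow> 0) (at_right 0)" by simp
    have "eventually (\<lambda>x. cnj (g (- ln x)) = ?\<psi> x) (at_right (0::real))"
      by (auto simp: eventually_at_right_field intro!: exI[of _ 1])
    with l0 have "(?\<psi> \<longlongrightarrow> 0) (at_right 0)"
      by (rule Lim_transform_eventually)
    then show ?thesis
      using True by (simp add: continuous_within at_within_Icc_at_right)
  next
    case False
    then have tp: "t > 0" using t by auto
    have "isCont (\<lambda>x. cnj (g (- ln x))) t"
      using tp by (intro continuous_intros isCont_o2[where g = g, OF _ gc]) auto
    moreover have "eventually (\<lambda>x. cnj (g (- ln x)) = ?\<psi> x) (nhds t)"
      using eventually_nhds_in_open[of "{0<..}" t] tp by (auto elim!: eventually_mono)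
    ultimately have "isCont ?\<psi> t" using isCont_cong[of "\<lambda>x. cnj (g (- ln x))" ?\<psi> t] by simp
    then show ?thesis by (rule continuous_at_imp_continuous_at_within)
  qed
  then show ?thesis by (simp add: continuous_on_eq_continuous_within)
qed



lemma exp_combine:
  "exp (- (of_nat N * of_real u)) * of_real (exp (- u) ^ i) = (exp (- (of_nat (N + i) * of_real u)) :: complex)"
proof -
  have "(of_real (exp (- u) ^ i) :: complex) = exp (- of_real u) ^ i"
    by (simp add: of_real_exp)
  also have "\<dots> = exp (of_nat i * (- of_real u))"
    by (rule exp_of_nat_mult[symmetric])
  finally have "(of_real (exp (- u) ^ i) :: complex) = exp (of_nat i * (- of_real u))" .
  then show ?thesis
    by (simp add: exp_add[symmetric] algebra_simps)
qed

lemma poly_orth: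
  fixes g :: "real \<Rightarrow> complex" and a :: "nat \<Rightarrow> complex"
  assumes cont: "continuous_on UNIV g" and bd: "\<And>u. norm (g u) \<le> B"
    and N: "N \<ge> 1" and mom: "\<And>j. LT g 0 (of_nat (N + j)) = 0"
  shows "(\<lambda>u. g u * exp (- (of_nat N * of_real u)) * (\<Sum>i\<le>n. a i * of_real (exp (- u) ^ i))) integrable_on {0..}"
    and "integral {0..} (\<lambda>u. g u * exp (- (of_nat N * of_real u)) * (\<Sum>i\<le>n. a i * of_real (exp (- u) ^ i))) = 0"
proof -
  have eq: "(\<lambda>u. g u * exp (- (of_nat N * of_real u)) * (\<Sum>i\<le>n. a i * of_real (exp (- u) ^ i)))
      = (\<lambda>u. \<Sum>i\<le>n. a i * (g u * exp (- (of_nat (N + i) * of_real u))))"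
  proof (rule ext)
    fix u
    have "g u * exp (- (of_nat N * of_real u)) * (\<Sum>i\<le>n. a i * of_real (exp (- u) ^ i))
        = (\<Sum>i\<le>n. a i * (g u * (exp (- (of_nat N * of_real u)) * of_real (exp (- u) ^ i))))"
      by (simp add: sum_distrib_left mult_ac)
    also have "\<dots> = (\<Sum>i\<le>n. a i * (g u * exp (- (of_nat (N + i) * of_real u))))"
      by (simp only: exp_combine)
    finally show "g u * exp (- (of_nat N * of_real u)) * (\<Sum>i\<le>n. a i * of_real (exp (- u) ^ i))
        = (\<Sum>i\<le>n. a i * (g u * exp (- (of_nat (N + i) * of_real u))))" .
  qed
  have int: "(\<lambda>u. g u * exp (- (of_nat (N + i) * of_real u))) integrable_on {0..}" for i
    using LT_int[OF cont bd, of "of_nat (N + i)" 0] N by simp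
  show "(\<lambda>u. g u * exp (- (of_nat N * of_real u)) * (\<Sum>i\<le>n. a i * of_real (exp (- u) ^ i))) integrable_on {0..}"
    unfolding eq by (intro integrable_sum integrable_on_mult_right int) auto
  have "integral {0..} (\<lambda>u. \<Sum>i\<le>n. a i * (g u * exp (- (of_nat (N + i) * of_real u))))
       = (\<Sum>i\<le>n. a i * LT g 0 (of_nat (N + i)))"
    by (subst integral_sum) (auto intro!: integrable_on_mult_right int simp: LT_def simp del: of_nat_add)
  also have "\<dots> = 0" by (simp only: mom) simp
  finally show "integral {0..} (\<lambda>u. g u * exp (- (of_nat N * of_real u)) * (\<Sum>i\<le>n. a i * of_real (exp (- u) ^ i))) = 0"
    unfolding eq .
qed



lemma moments_zero:
  fixes g :: "real \<Rightarrow> complex"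
  assumes cont: "continuous_on UNIV g" and bd: "\<And>u. norm (g u) \<le> B"
    and lim: "(g \<longlongrightarrow> 0) at_top"
    and N: "N \<ge> 1" and mom: "\<And>j. LT g 0 (of_nat (N + j)) = 0"
    and u: "u \<ge> 0"
  shows "g u = 0"
proof -
  have B0: "B \<ge> 0" using bd[of 0] norm_ge_zero order_trans by blast
  define \<psi> where "\<psi> = (\<lambda>t::real. if t \<le> 0 then 0 else cnj (g (- ln t)))"
  have psic: "continuous_on {0..1} \<psi>" unfolding \<psi>_def by (rule psi_cont[OF cont lim])
  have psie: "\<psi> (exp (- v)) = cnj (g v)" for v by (simp add: \<psi>_def)
  have e01: "exp (- v) \<in> {0..1}" if "v \<ge> 0" for v :: real using that by simp
  let ?X = "\<lambda>u. g u * exp (- (of_nat N * of_real u))"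
  define M where "M = integral {0..} (\<lambda>u. g u * cnj (g u) * exp (- (of_nat N * of_real u)))"
  have bdgg: "norm (g v * cnj (g v)) \<le> B * B" for v
    by (simp add: norm_mult mult_mono' bd B0)
  have contgg: "continuous_on UNIV (\<lambda>v. g v * cnj (g v))"
    by (intro continuous_intros cont)
  have intM: "(\<lambda>u. g u * cnj (g u) * exp (- (of_nat N * of_real u))) integrable_on {0..}"
    using LT_int[OF contgg bdgg, of "of_nat N" 0] N by simp
  have small: "norm M \<le> B * (2 * \<epsilon>) * (1 / real N)" if e: "\<epsilon> > 0" for \<epsilon>
  proof -
    have cRe: "continuous_on {0..1} (\<lambda>t. Re (\<psi> t))" by (intro continuous_intros psic)
    have cIm: "continuous_on {0..1} (\<lambda>t. Im (\<psi> t))" by (intro continuous_intros psic)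
    obtain pr where pr: "real_polynomial_function pr" "\<And>t. t \<in> {0..1} \<Longrightarrow> \<bar>Re (\<psi> t) - pr t\<bar> < \<epsilon>"
      using Stone_Weierstrass_real_polynomial_function[OF compact_Icc cRe e] by blast
    obtain pi where pi: "real_polynomial_function pi" "\<And>t. t \<in> {0..1} \<Longrightarrow> \<bar>Im (\<psi> t) - pi t\<bar> < \<epsilon>"
      using Stone_Weierstrass_real_polynomial_function[OF compact_Icc cIm e] by blast
    obtain ar n1 where ar: "pr = (\<lambda>x. \<Sum>i\<le>n1. ar i * x ^ i)"
      using real_polynomial_function_imp_sum[OF pr(1)] by blast
    obtain ai n2 where ai: "pi = (\<lambda>x. \<Sum>i\<le>n2. ai i * x ^ i)"
      using real_polynomial_function_imp_sum[OF pi(1)] by blast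
    define p where "p = (\<lambda>t. complex_of_real (pr t) + \<i> * complex_of_real (pi t))"
    have pclose: "norm (\<psi> t - p t) \<le> 2 * \<epsilon>" if "t \<in> {0..1}" for t
    proof -
      have "norm (\<psi> t - p t) \<le> \<bar>Re (\<psi> t - p t)\<bar> + \<bar>Im (\<psi> t - p t)\<bar>" by (rule cmod_le)
      also have "\<dots> = \<bar>Re (\<psi> t) - pr t\<bar> + \<bar>Im (\<psi> t) - pi t\<bar>" by (simp add: p_def)
      also have "\<dots> \<le> 2 * \<epsilon>" using pr(2)[OF that] pi(2)[OF that] by simp
      finally show ?thesis .
    qed
    define S1 where "S1 = (\<lambda>u. (\<Sum>i\<le>n1. complex_of_real (ar i) * of_real (exp (- u) ^ i)))"
    define S2 where "S2 = (\<lambda>u. (\<Sum>i\<le>n2. (\<i> * complex_of_real (ai i)) * of_real (exp (- u) ^ i)))"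
    have psum: "p (exp (- v)) = S1 v + S2 v" for v
      by (simp add: p_def ar ai S1_def S2_def sum_distrib_left mult_ac)
    have i1: "(\<lambda>u. ?X u * S1 u) integrable_on {0..}" "integral {0..} (\<lambda>u. ?X u * S1 u) = 0"
      using poly_orth[OF cont bd N mom, where n=n1 and a="\<lambda>i. complex_of_real (ar i)"] by (simp_all add: S1_def)
    have i2: "(\<lambda>u. ?X u * S2 u) integrable_on {0..}" "integral {0..} (\<lambda>u. ?X u * S2 u) = 0"
      using poly_orth[OF cont bd N mom, where n=n2 and a="\<lambda>i. \<i> * complex_of_real (ai i)"] by (simp_all add: S2_def)
    have eqp: "(\<lambda>u. ?X u * p (exp (- u))) = (\<lambda>u. ?X u * S1 u + ?X u * S2 u)"
      by (simp add: psum fun_eq_iff algebra_simps)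
    have ip: "(\<lambda>u. ?X u * p (exp (- u))) integrable_on {0..}"
      unfolding eqp by (intro integrable_add i1 i2)
    have ip0: "integral {0..} (\<lambda>u. ?X u * p (exp (- u))) = 0"
      unfolding eqp by (subst integral_add) (use i1 i2 in auto)
    have intM': "(\<lambda>u. ?X u * cnj (g u)) integrable_on {0..}"
      using intM by (simp add: mult_ac)
    have "M = integral {0..} (\<lambda>u. ?X u * cnj (g u)) - integral {0..} (\<lambda>u. ?X u * p (exp (- u)))"
      unfolding M_def ip0 by (simp add: mult_ac)
    also have "\<dots> = integral {0..} (\<lambda>u. ?X u * cnj (g u) - ?X u * p (exp (- u)))"
      by (rule integral_diff[symmetric, OF intM' ip])
    finally have Meq: "M = integral {0..} (\<lambda>u. ?X u * cnj (g u) - ?X u * p (exp (- u)))" .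
    have "norm M \<le> integral {0..} (\<lambda>u. (B * (2 * \<epsilon>)) * exp (- (real N * u)))"
      unfolding Meq
    proof (rule integral_norm_bound_integral)
      show "(\<lambda>u. ?X u * cnj (g u) - ?X u * p (exp (- u))) integrable_on {0..}"
        by (intro integrable_diff intM' ip)
      show "(\<lambda>u. (B * (2 * \<epsilon>)) * exp (- (real N * u))) integrable_on {0..}"
        using N by (intro exp_int) auto
      fix v :: real assume "v \<in> {0..}"
      then have v: "v \<ge> 0" by simp
      have "norm (?X v * cnj (g v) - ?X v * p (exp (- v))) = norm (g v) * exp (- (real N * v)) * norm (\<psi> (exp (- v)) - p (exp (- v)))"
        by (simp add: psie norm_mult right_diff_distrib[symmetric])
      also have "\<dots> \<le> B * exp (- (real N * v)) * (2 * \<epsilon>)"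
        using pclose[OF e01[OF v]] bd[of v] B0 by (intro mult_mono) auto
      finally show "norm (?X v * cnj (g v) - ?X v * p (exp (- v))) \<le> (B * (2 * \<epsilon>)) * exp (- (real N * v))"
        by (simp add: mult_ac)
    qed
    also have "\<dots> = B * (2 * \<epsilon>) * (1 / real N)"
      using has_integral_exp_minus_to_infinity[of "real N" 0] N
      by (subst integral_mult_right) (simp add: integral_unique)
    finally show ?thesis .
  qed
  have M0: "M = 0"
  proof (rule ccontr)
    assume "M \<noteq> 0"
    then have Mp: "norm M > 0" by simp
    define \<epsilon> where "\<epsilon> = norm M * real N / (4 * (B + 1))"
    have ep: "\<epsilon> > 0" using Mp N B0 by (simp add: \<epsilon>_def)
    have "norm M \<le> B * (2 * \<epsilon>) * (1 / real N)" by (rule small[OF ep])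
    also have "\<dots> = norm M * (B / (2 * (B + 1)))"
      using N B0 by (simp add: \<epsilon>_def field_simps)
    also have "\<dots> < norm M * 1"
      using Mp B0 by (intro mult_strict_left_mono) (auto simp: divide_less_eq)
    finally show False by simp
  qed
  define q where "q = (\<lambda>v. (norm (g v))^2 * exp (- (real N * v)))"
  have qeq: "q = Re \<circ> (\<lambda>u. g u * cnj (g u) * exp (- (of_nat N * of_real u)))"
  proof (rule ext)
    fix v
    have "g v * cnj (g v) * exp (- (of_nat N * of_real v)) = complex_of_real (q v)"
      by (simp add: q_def complex_norm_square[symmetric] of_real_exp)
    then show "q v = (Re \<circ> (\<lambda>u. g u * cnj (g u) * exp (- (of_nat N * of_real u)))) v" by simp
  qed
  have qint: "q integrable_on {0..}"
    unfolding qeq by (rule integrable_linear[OF intM bounded_linear_Re])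
  have qi0: "integral {0..} q = 0"
    unfolding qeq using integral_linear[OF intM bounded_linear_Re] M0 by (simp add: M_def)
  have qnn: "q v \<ge> 0" for v by (simp add: q_def)
  have qc: "continuous_on UNIV q" unfolding q_def by (intro continuous_intros cont)
  have qiU: "q integrable_on {0..u+1}"
    by (intro integrable_continuous_interval continuous_on_subset[OF qc]) auto
  have "integral {0..u+1} q \<le> integral {0..} q"
    by (rule integral_subset_le[OF _ qiU qint]) (auto simp: qnn)
  moreover have "integral {0..u+1} q \<ge> 0" by (rule integral_nonneg[OF qiU]) (simp add: qnn)
  ultimately have "integral {0..u+1} q = 0" using qi0 by simp
  then have "(q has_integral 0) (cbox 0 (u+1))"
    using qiU by (simp add: has_integral_iff)
  then have "q u = 0"
    using has_integral_0_cbox_imp_0[where a=0 and b="u+1" and f=q and x=u] u qnn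
      continuous_on_subset[OF qc, of "cbox 0 (u+1)"] by (auto simp: box_real)
  then show ?thesis by (simp add: q_def)
qed



lemma expsum_ev:
  fixes S :: "nat set" and b :: "nat \<Rightarrow> real" and c :: "nat \<Rightarrow> complex"
  assumes fin: "finite S" and inj: "inj_on b S" and k0: "k0 \<in> S" "c k0 \<noteq> 0"
  shows "eventually (\<lambda>\<sigma>::real. (\<Sum>k\<in>S. c k * exp (- (of_real \<sigma> * of_real (b k)))) \<noteq> 0) at_top"
proof -
  define S' where "S' = {k\<in>S. c k \<noteq> 0}"
  have fS': "finite S'" "S' \<noteq> {}" using fin k0 by (auto simp: S'_def)
  define m where "m = Min (b ` S')"
  have "m \<in> b ` S'" unfolding m_def using fS' by (intro Min_in) auto
  then obtain k1 where k1: "k1 \<in> S'" "b k1 = m" by auto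
  have mle: "m \<le> b k" if "k \<in> S'" for k using fS' that by (simp add: m_def)
  define f where "f = (\<lambda>\<sigma>::real. \<Sum>k\<in>S. c k * exp (- (of_real \<sigma> * of_real (b k - m))))"
  have Pf: "(\<Sum>k\<in>S. c k * exp (- (of_real \<sigma> * of_real (b k)))) = exp (- (of_real \<sigma> * of_real m)) * f \<sigma>" for \<sigma>
    by (simp add: f_def sum_distrib_left exp_add[symmetric] algebra_simps)
  have k1S: "k1 \<in> S" "c k1 \<noteq> 0" using k1 by (auto simp: S'_def)
  have fsplit: "f \<sigma> = c k1 + (\<Sum>k\<in>S - {k1}. c k * exp (- (of_real \<sigma> * of_real (b k - m))))" for \<sigma>
    unfolding f_def using fin k1S k1 by (subst sum.remove[of _ k1]) auto
  have term0: "((\<lambda>\<sigma>::real. c k * exp (- (of_real \<sigma> * of_real (b k - m)))) \<longlongrightarrow> 0) at_top"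
    if k: "k \<in> S - {k1}" for k
  proof (cases "c k = 0")
    case True then show ?thesis by simp
  next
    case False
    then have kS': "k \<in> S'" using k by (auto simp: S'_def)
    have "b k \<noteq> b k1" using inj k k1S by (auto dest: inj_onD)
    then have d: "b k - m > 0" using mle[OF kS'] k1 by simp
    have "((\<lambda>\<sigma>::real. exp (- (\<sigma> * (b k - m)))) \<longlongrightarrow> 0) at_top"
      using d by real_asymp
    from tendsto_of_real[OF this, where 'a=complex]
    have "((\<lambda>\<sigma>::real. complex_of_real (exp (- (\<sigma> * (b k - m))))) \<longlongrightarrow> 0) at_top"
      by simp
    then have "((\<lambda>\<sigma>::real. exp (- (of_real \<sigma> * of_real (b k - m)))) \<longlongrightarrow> (0::complex)) at_top"
      by (simp add: of_real_exp)
    then show ?thesis by (rule tendsto_mult_right_zero)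
  qed
  have "(f \<longlongrightarrow> c k1 + 0) at_top"
    unfolding fsplit[abs_def]
    by (intro tendsto_add tendsto_const tendsto_null_sum term0)
  then have "eventually (\<lambda>\<sigma>. f \<sigma> \<noteq> 0) at_top"
    using k1S(2) by (intro tendsto_imp_eventually_ne) auto
  then show ?thesis by (auto simp: Pf elim: eventually_mono)
qed



lemma core:
  fixes g :: "real \<Rightarrow> complex" and S :: "nat set" and b :: "nat \<Rightarrow> real" and c :: "nat \<Rightarrow> complex"
  assumes cont: "continuous_on UNIV g" and bd: "\<And>u. norm (g u) \<le> B"
    and lim: "(g \<longlongrightarrow> 0) at_top"
    and fin: "finite S" and bpos: "\<And>k. k \<in> S \<Longrightarrow> b k > 0" and inj: "inj_on b S"
    and k0: "k0 \<in> S" "c k0 \<noteq> 0"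
    and rel: "\<And>u. (\<Sum>k\<in>S. c k * g (u - b k)) = 0"
    and u: "u \<ge> 0"
  shows "g u = 0"
proof -
  have B0: "B \<ge> 0" using bd[of 0] norm_ge_zero order_trans by blast
  define P where "P = (\<lambda>s. \<Sum>k\<in>S. c k * exp (- (s * of_real (b k))))"
  define I where "I = (\<lambda>k s. integral {- b k..0} (\<lambda>v. g v * exp (- (s * of_real v))))"
  define E where "E = (\<lambda>s. \<Sum>k\<in>S. c k * exp (- (s * of_real (b k))) * I k s)"
  define gm where "gm = (\<lambda>u. g (- u))"
  have contm: "continuous_on UNIV gm"
    unfolding gm_def by (intro continuous_on_compose2[OF cont] continuous_intros) auto
  have bdm: "norm (gm u) \<le> B" for u unfolding gm_def by (rule bd)
  have contsh: "continuous_on UNIV (\<lambda>u. h (u - d))" if "continuous_on UNIV h" for h :: "real \<Rightarrow> complex" and d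
    by (intro continuous_on_compose2[OF that] continuous_intros) auto
  have right: "P s * LT g 0 s + E s = 0" if s: "Re s > 0" for s
  proof -
    have int: "(\<lambda>u. g (u - b k) * exp (- (s * of_real u))) integrable_on {0..}" for k
      by (rule LT_int[OF contsh[OF cont] bd s])
    have "0 = integral {0..} (\<lambda>u. (\<Sum>k\<in>S. c k * g (u - b k)) * exp (- (s * of_real u)))"
      by (simp add: rel)
    also have "\<dots> = integral {0..} (\<lambda>u. \<Sum>k\<in>S. c k * (g (u - b k) * exp (- (s * of_real u))))"
      by (simp only: sum_distrib_right mult.assoc)
    also have "\<dots> = (\<Sum>k\<in>S. c k * integral {0..} (\<lambda>u. g (u - b k) * exp (- (s * of_real u))))"
    proof -
      have intc: "(\<lambda>u. c k * (g (u - b k) * exp (- (s * of_real u)))) integrable_on {0..}" for k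
        using int by (rule integrable_on_mult_right)
      show ?thesis by (simp only: integral_sum[OF fin intc] integral_mult_right)
    qed
    also have "\<dots> = (\<Sum>k\<in>S. c k * (exp (- (s * of_real (b k))) * LT g (0 - b k) s))"
      by (intro sum.cong refl) (simp only: LT_shift[OF cont bd s])
    also have "\<dots> = (\<Sum>k\<in>S. c k * exp (- (s * of_real (b k))) * (I k s + LT g 0 s))"
    proof (intro sum.cong refl)
      fix k assume k: "k \<in> S"
      have "LT g (0 - b k) s = I k s + LT g 0 s"
        unfolding I_def using LT_split[OF cont bd s, of "- b k" 0] bpos[OF k] by simp
      then show "c k * (exp (- (s * of_real (b k))) * LT g (0 - b k) s) = c k * exp (- (s * of_real (b k))) * (I k s + LT g 0 s)"
        by (simp add: mult_ac)
    qed
    also have "\<dots> = P s * LT g 0 s + E s"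
      by (simp add: P_def E_def sum_distrib_left sum_distrib_right sum.distrib algebra_simps)
    finally show ?thesis by simp
  qed
  have left: "P s * LT gm 0 (- s) - E s = 0" if s: "Re s < 0" for s
  proof -
    have t: "Re (- s) > 0" using s by simp
    have int: "(\<lambda>u. gm (u - (- b k)) * exp (- (- s * of_real u))) integrable_on {0..}" for k
      by (rule LT_int[OF contsh[OF contm] bdm t])
    have relm: "(\<Sum>k\<in>S. c k * gm (v - (- b k))) = 0" for v
      using rel[of "- v"] by (simp add: gm_def)
    have "0 = integral {0..} (\<lambda>u. (\<Sum>k\<in>S. c k * gm (u - (- b k))) * exp (- (- s * of_real u)))"
      by (simp only: relm) simp
    also have "\<dots> = integral {0..} (\<lambda>u. \<Sum>k\<in>S. c k * (gm (u - (- b k)) * exp (- (- s * of_real u))))"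
      by (simp only: sum_distrib_right mult.assoc)
    also have "\<dots> = (\<Sum>k\<in>S. c k * integral {0..} (\<lambda>u. gm (u - (- b k)) * exp (- (- s * of_real u))))"
    proof -
      have intc: "(\<lambda>u. c k * (gm (u - (- b k)) * exp (- (- s * of_real u)))) integrable_on {0..}" for k
        using int by (rule integrable_on_mult_right)
      show ?thesis by (simp only: integral_sum[OF fin intc] integral_mult_right)
    qed
    also have "\<dots> = (\<Sum>k\<in>S. c k * (exp (- (- s * of_real (- b k))) * LT gm (0 - (- b k)) (- s)))"
      by (intro sum.cong refl) (simp only: LT_shift[OF contm bdm t])
    also have "\<dots> = (\<Sum>k\<in>S. c k * exp (- (s * of_real (b k))) * (LT gm 0 (- s) - I k s))"
    proof (intro sum.cong refl)
      fix k assume k: "k \<in> S"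
      have sp: "LT gm 0 (- s) = integral {0..b k} (\<lambda>u. gm u * exp (- (- s * of_real u))) + LT gm (b k) (- s)"
        using LT_split[OF contm bdm t, of 0 "b k"] bpos[OF k] by simp
      have "integral {0..b k} (\<lambda>u. gm u * exp (- (- s * of_real u)))
          = integral {- 0..- (- b k)} (\<lambda>x. (\<lambda>v. g v * exp (- (s * of_real v))) (- x))"
        by (simp add: gm_def)
      also have "\<dots> = I k s" unfolding I_def
        using Henstock_Kurzweil_Integration.integral_reflect_real[where a="- b k" and b=0 and f="\<lambda>v. g v * exp (- (s * of_real v))"] by simp
      finally have "LT gm (b k) (- s) = LT gm 0 (- s) - I k s" using sp by simp
      then show "c k * (exp (- (- s * of_real (- b k))) * LT gm (0 - (- b k)) (- s)) = c k * exp (- (s * of_real (b k))) * (LT gm 0 (- s) - I k s)"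
        by (simp add: mult_ac)
    qed
    also have "\<dots> = P s * LT gm 0 (- s) - E s"
      by (simp add: P_def E_def sum_distrib_left sum_distrib_right sum_subtractf algebra_simps)
    finally show ?thesis by simp
  qed
  have holP: "P holomorphic_on UNIV" unfolding P_def by (intro holomorphic_intros)
  have holE: "E holomorphic_on UNIV" unfolding E_def I_def
    by (intro holomorphic_intros I_holo[OF cont])
  obtain K where K: "\<And>\<sigma>. \<sigma> \<ge> K \<Longrightarrow> P (of_real \<sigma>) \<noteq> 0"
    using expsum_ev[where c=c, OF fin inj k0] unfolding eventually_at_top_linorder P_def by blast
  have PK: "P (of_real K) \<noteq> 0" using K by simp
  have ev: "eventually (\<lambda>w. P w \<noteq> 0) (at z)" for z
    using non_zero_neighbour_alt[OF holP open_UNIV connected_UNIV _ _ PK, of z]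
    by (auto elim: eventually_mono)
  have bnd: "norm (E s / P s) \<le> B / \<bar>Re s\<bar>" if "Re s \<noteq> 0" "P s \<noteq> 0" for s
  proof (cases "Re s > 0")
    case True
    have "E s / P s = - LT g 0 s" using right[OF True] that(2) by (simp add: field_simps add_eq_0_iff)
    then have "norm (E s / P s) = norm (LT g 0 s)" by simp
    also have "\<dots> \<le> B * (exp (- (Re s * 0)) / Re s)" by (rule LT_bound[OF cont bd True])
    finally show ?thesis using True by simp
  next
    case False
    then have sn: "Re s < 0" using that(1) by simp
    have "E s / P s = LT gm 0 (- s)" using left[OF sn] that(2) by (simp add: field_simps)
    then have "norm (E s / P s) = norm (LT gm 0 (- s))" by simp
    also have "\<dots> \<le> B * (exp (- (Re (- s) * 0)) / Re (- s))" by (rule LT_bound[OF contm bdm]) (use sn in simp)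
    finally show ?thesis using sn by simp
  qed
  have hor: "((\<lambda>\<sigma>. of_real \<sigma> * (E (z + of_real \<sigma>) / P (z + of_real \<sigma>))) \<longlongrightarrow> 0) (at_right 0)"
    if z: "Re z = 0" for z
  proof -
    have plim: "filterlim (\<lambda>\<sigma>::real. z + of_real \<sigma>) (at z) (at_right 0)"
    proof (rule filterlim_atI)
      show "((\<lambda>\<sigma>::real. z + of_real \<sigma>) \<longlongrightarrow> z) (at_right 0)"
        by (auto intro!: tendsto_eq_intros)
      show "eventually (\<lambda>x. z + of_real x \<noteq> z) (at_right (0::real))"
        unfolding eventually_at_right_field by (auto intro!: exI[of _ 1])
    qed
    have evP: "eventually (\<lambda>\<sigma>. P (z + of_real \<sigma>) \<noteq> 0) (at_right (0::real))"
      using filterlim_iff[THEN iffD1, OF plim, rule_format, OF ev[of z]] .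
    have evpos: "eventually (\<lambda>\<sigma>::real. \<sigma> > 0) (at_right 0)"
      by (simp add: eventually_at_right_field) (auto intro!: exI[of _ 1])
    have "((\<lambda>\<sigma>. - (of_real \<sigma> * LT g 0 (z + of_real \<sigma>))) \<longlongrightarrow> - 0) (at_right 0)"
      by (intro tendsto_minus LT_horiz[OF cont bd lim z])
    then have l: "((\<lambda>\<sigma>. - (of_real \<sigma> * LT g 0 (z + of_real \<sigma>))) \<longlongrightarrow> 0) (at_right 0)" by simp
    have "eventually (\<lambda>\<sigma>. - (of_real \<sigma> * LT g 0 (z + of_real \<sigma>)) = of_real \<sigma> * (E (z + of_real \<sigma>) / P (z + of_real \<sigma>))) (at_right 0)"
      using evP evpos
    proof eventually_elim
      case (elim \<sigma>)
      have "Re (z + of_real \<sigma>) > 0" using elim z by simp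
      from right[OF this] elim(1)
      have "E (z + of_real \<sigma>) / P (z + of_real \<sigma>) = - LT g 0 (z + of_real \<sigma>)"
        by (simp add: field_simps add_eq_0_iff)
      then show ?case by simp
    qed
    with l show ?thesis by (rule Lim_transform_eventually)
  qed
  have E0: "E s = 0" if "P s \<noteq> 0" for s
    by (rule entire_zero[OF holP holE PK B0 bnd hor that]) auto
  define N where "N = nat \<lceil>K\<rceil> + 1"
  have N1: "N \<ge> 1" by (simp add: N_def)
  have mom: "LT g 0 (of_nat (N + j)) = 0" for j
  proof -
    have "real (N + j) \<ge> K" unfolding N_def by linarith
    then have Pn: "P (of_real (real (N + j))) \<noteq> 0" by (rule K)
    have pos: "Re (of_real (real (N + j)) :: complex) > 0" by (simp add: N_def)
    have "P (of_real (real (N + j))) * LT g 0 (of_real (real (N + j))) = 0"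
      using right[OF pos] E0[OF Pn] by simp
    then show ?thesis using Pn by simp
  qed
  show ?thesis by (rule moments_zero[OF cont bd lim N1 mom u])
qed



lemma bounded_f:
  fixes f :: "real \<Rightarrow> complex"
  assumes cont: "continuous_on {0..} f" and lim: "(f \<longlongrightarrow> 0) at_top"
  obtains B where "\<And>x. x \<ge> 0 \<Longrightarrow> norm (f x) \<le> B"
proof -
  obtain X where X: "\<And>x. x \<ge> X \<Longrightarrow> norm (f x) < 1"
    using tendstoD[OF lim, of 1] unfolding eventually_at_top_linorder by auto
  have "compact (f ` {0..X})"
    by (intro compact_continuous_image continuous_on_subset[OF cont]) auto
  then obtain C where C: "\<And>y. y \<in> f ` {0..X} \<Longrightarrow> norm y \<le> C"
    using compact_imp_bounded bounded_iff by metis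
  have "norm (f x) \<le> max C 1" if "x \<ge> 0" for x
  proof (cases "x \<le> X")
    case True then show ?thesis using C[of "f x"] that by force
  next
    case False then show ?thesis using X[of x] by force
  qed
  then show ?thesis using that by blast
qed

theorem lemma2p1:
  fixes f :: "real \<Rightarrow> complex" and n :: nat
    and lam :: "nat \<Rightarrow> real" and c :: "nat \<Rightarrow> complex"
  assumes cont: "continuous_on {0..} f"
    and nonzero: "\<exists>x\<ge>0. f x \<noteq> 0"
    and lim: "(f \<longlongrightarrow> 0) at_top"
    and n: "n \<ge> 1"
    and pos: "\<And>k. k \<in> {1..n} \<Longrightarrow> lam k > 0"
    and distinct: "inj_on lam {1..n}"
    and rel: "\<And>x. x \<ge> 0 \<Longrightarrow> (\<Sum>k=1..n. c k * f (x / lam k)) = 0"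
  shows "\<forall>k\<in>{1..n}. c k = 0"
proof (rule ccontr)
  assume "\<not> (\<forall>k\<in>{1..n}. c k = 0)"
  then obtain k0 where k0: "k0 \<in> {1..n}" "c k0 \<noteq> 0" by blast
  obtain x1 where x1: "x1 > 0" "f x1 \<noteq> 0"
  proof -
    from nonzero obtain x0 where x0: "x0 \<ge> 0" "f x0 \<noteq> 0" by blast
    show ?thesis
    proof (cases "x0 > 0")
      case True then show ?thesis using that x0 by blast
    next
      case False
      then have x00: "x0 = 0" using x0 by simp
      have "(f \<longlongrightarrow> f 0) (at 0 within {0..})"
        using cont unfolding continuous_on_def by auto
      then have "eventually (\<lambda>x. f x \<noteq> 0) (at 0 within {0..})"
        using x0 x00 by (intro tendsto_imp_eventually_ne) auto
      then obtain d where d: "d > 0" "\<And>x. x \<in> {0..} \<Longrightarrow> x \<noteq> 0 \<Longrightarrow> dist x 0 < d \<Longrightarrow> f x \<noteq> 0"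
        unfolding eventually_at by blast
      show ?thesis using that[of "d/2"] d by auto
    qed
  qed
  obtain B where B: "\<And>x. x \<ge> 0 \<Longrightarrow> norm (f x) \<le> B" using bounded_f[OF cont lim] by blast
  define T where "T = \<bar>ln x1\<bar> + (\<Sum>k\<in>{1..n}. \<bar>ln (lam k)\<bar>) + 1"
  define g where "g = (\<lambda>u. f (exp (u - T)))"
  define b where "b = (\<lambda>k. ln (lam k) + T)"
  have contg: "continuous_on UNIV g"
    unfolding g_def by (rule continuous_on_compose2[OF cont]) (auto intro!: continuous_intros)
  have bdg: "norm (g u) \<le> B" for u unfolding g_def by (rule B) simp
  have "filterlim (\<lambda>u. exp (u - T)) at_top at_top" by real_asymp
  then have limg: "(g \<longlongrightarrow> 0) at_top" unfolding g_def by (rule filterlim_compose[OF lim])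
  have sumnn: "\<bar>ln (lam k)\<bar> \<le> (\<Sum>k\<in>{1..n}. \<bar>ln (lam k)\<bar>)" if "k \<in> {1..n}" for k
    by (rule member_le_sum[OF that]) auto
  have bpos: "b k > 0" if "k \<in> {1..n}" for k
    using sumnn[OF that] by (simp add: b_def T_def)
  have injb: "inj_on b {1..n}"
  proof (rule inj_onI)
    fix k k' assume k: "k \<in> {1..n}" "k' \<in> {1..n}" and "b k = b k'"
    then have "ln (lam k) = ln (lam k')" by (simp add: b_def)
    then have "lam k = lam k'" using pos[OF k(1)] pos[OF k(2)] by simp
    then show "k = k'" using distinct k by (auto dest: inj_onD)
  qed
  have relg: "(\<Sum>k\<in>{1..n}. c k * g (u - b k)) = 0" for u
  proof -
    have "(\<Sum>k\<in>{1..n}. c k * g (u - b k)) = (\<Sum>k=1..n. c k * f (exp (u - T - T) / lam k))"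
    proof (intro sum.cong refl)
      fix k assume k: "k \<in> {1..n}"
      have "exp (u - b k - T) = exp (u - T - T - ln (lam k))" by (simp add: b_def algebra_simps)
      also have "\<dots> = exp (u - T - T) / lam k" using pos[OF k] by (simp add: exp_diff)
      finally show "c k * g (u - b k) = c k * f (exp (u - T - T) / lam k)" by (simp add: g_def)
    qed
    also have "\<dots> = 0" by (rule rel) simp
    finally show ?thesis .
  qed
  have sn: "(\<Sum>k\<in>{1..n}. \<bar>ln (lam k)\<bar>) \<ge> 0" by (rule sum_nonneg) simp
  have u0: "ln x1 + T \<ge> 0" unfolding T_def using sn by linarith
  have "g (ln x1 + T) = 0"
    by (rule core[OF contg bdg limg _ bpos injb k0 relg u0]) auto
  moreover have "g (ln x1 + T) = f x1" using x1 by (simp add: g_def)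
  ultimately show False using x1 by simp
qed

end
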